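(* Let $V$ and $V'$ be left vector spaces over fields $K$ and $K'$ respectively (arbitrary, possibly infinite, dimensions), with $\mathcal G\neq\emptyset$ and $\mathcal G'\neq\emptyset$. If $\phi:\mathcal G\to\mathcal G'$ is an isomorphism of distant graphs (a bijection such that for all $X,Y\in\mathcal G$: $X\oplus Y=V$ if and only if $X^\phi\oplus Y^\phi=V'$), then $\phi$ is also an isomorphism of Grassmann graphs (for all $X,Y\in\mathcal G$: $X\sim Y$ if and only if $X^\phi\sim Y^\phi$).
   Context: Fields are not necessarily commutative (division rings). For a left vector space $V$ over $K$, $\mathcal G$ denotes the set of all subspaces $X\le V$ such that $X$ is isomorphic to $V/X$; $\mathcal G'$ is defined likewise for $V'$. Two elements $X,Y\in\mathcal G$ are distant if $X\oplus Y=V$. They are adjacent ($X\sim Y$) if $\dim((X+Y)/X)=\dim((X+Y)/Y)=1$. The distant graph on $\mathcal G$ has vertex set $\mathcal G$ and edges the unordered pairs of distant elements; the Grassmann graph on $\mathcal G$ has vertex set $\mathcal G$ and edges the pairs of adjacent elements. *)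

theory Defs
  imports Main
begin

text \<open>A left vector space over a (not necessarily commutative) field, i.e. a division
ring 'k. The vector space is the whole type 'v, with scalar multiplication sm.\<close>

definition left_vs :: "('k::division_ring \<Rightarrow> 'v::ab_group_add \<Rightarrow> 'v) \<Rightarrow> bool" where
  "left_vs sm \<longleftrightarrow>
     (\<forall>a x y. sm a (x + y) = sm a x + sm a y) \<and>
     (\<forall>a b x. sm (a + b) x = sm a x + sm b x) \<and>
     (\<forall>a b x. sm (a * b) x = sm a (sm b x)) \<and>
     (\<forall>x. sm 1 x = x)"

definition subspace_of :: "('k::division_ring \<Rightarrow> 'v::ab_group_add \<Rightarrow> 'v) \<Rightarrow> 'v set \<Rightarrow> bool" where
  "subspace_of sm X \<longleftrightarrow> 0 \<in> X \<and> (\<forall>x\<in>X. \<forall>y\<in>X. x + y \<in> X) \<and> (\<forall>a. \<forall>x\<in>X. sm a x \<in> X)"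

definition coset_of :: "'v::ab_group_add set \<Rightarrow> 'v \<Rightarrow> 'v set" where
  "coset_of X v = (\<lambda>x. v + x) ` X"

definition quotient_sp :: "'v::ab_group_add set \<Rightarrow> 'v set set" where
  "quotient_sp X = range (coset_of X)"

text \<open>X is isomorphic (as a vector space) to V/X: a linear bijection X \<rightarrow> V/X, where
 the quotient operations are (u+X)+(v+X) = (u+v)+X and a(v+X) = (av)+X.\<close>

definition iso_to_quotient :: "('k::division_ring \<Rightarrow> 'v::ab_group_add \<Rightarrow> 'v) \<Rightarrow> 'v set \<Rightarrow> bool" where
  "iso_to_quotient sm X \<longleftrightarrow>
     (\<exists>f. bij_betw f X (quotient_sp X) \<and>
          (\<forall>x\<in>X. \<forall>y\<in>X. \<forall>u v. f x = coset_of X u \<longrightarrow> f y = coset_of X v \<longrightarrow>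
               f (x + y) = coset_of X (u + v)) \<and>
          (\<forall>a. \<forall>x\<in>X. \<forall>u. f x = coset_of X u \<longrightarrow> f (sm a x) = coset_of X (sm a u)))"

definition Gr :: "('k::division_ring \<Rightarrow> 'v::ab_group_add \<Rightarrow> 'v) \<Rightarrow> 'v set set" where
  "Gr sm = {X. subspace_of sm X \<and> iso_to_quotient sm X}"

definition sumset :: "'v::ab_group_add set \<Rightarrow> 'v set \<Rightarrow> 'v set" where
  "sumset X Y = {x + y | x y. x \<in> X \<and> y \<in> Y}"

definition distant :: "'v::ab_group_add set \<Rightarrow> 'v set \<Rightarrow> bool" where
  "distant X Y \<longleftrightarrow> X \<inter> Y = {0} \<and> sumset X Y = UNIV"

text \<open>dim(Z/X) = 1 for subspaces X \<subseteq> Z: Z/X is spanned by a single nonzero coset.\<close>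
definition quot_dim_one :: "('k::division_ring \<Rightarrow> 'v::ab_group_add \<Rightarrow> 'v) \<Rightarrow> 'v set \<Rightarrow> 'v set \<Rightarrow> bool" where
  "quot_dim_one sm Z X \<longleftrightarrow> X \<subseteq> Z \<and>
     (\<exists>v\<in>Z. v \<notin> X \<and> Z = {x + sm a v | x a. x \<in> X})"

definition adjacent :: "('k::division_ring \<Rightarrow> 'v::ab_group_add \<Rightarrow> 'v) \<Rightarrow> 'v set \<Rightarrow> 'v set \<Rightarrow> bool" where
  "adjacent sm X Y \<longleftrightarrow> quot_dim_one sm (sumset X Y) X \<and> quot_dim_one sm (sumset X Y) Y"

end

theory Submission
  imports Defs
begin

definition charP :: "'a set \<Rightarrow> ('a \<Rightarrow> 'a \<Rightarrow> bool) \<Rightarrow> 'a \<Rightarrow> 'a \<Rightarrow> bool" where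
  "charP G R X Y \<longleftrightarrow> X \<noteq> Y \<and> (\<exists>Z\<in>G. Z \<noteq> X \<and> Z \<noteq> Y \<and> (\<forall>W\<in>G. R Z W \<longrightarrow> R X W \<or> R Y W))"

locale lvs =
  fixes sm :: "'k::division_ring \<Rightarrow> 'v::ab_group_add \<Rightarrow> 'v"
  assumes lv: "left_vs sm"
begin

lemma sm_addr: "sm a (x + y) = sm a x + sm a y" using lv unfolding left_vs_def by blast
lemma sm_addl: "sm (a + b) x = sm a x + sm b x" using lv unfolding left_vs_def by blast
lemma sm_mult: "sm (a * b) x = sm a (sm b x)" using lv unfolding left_vs_def by blast
lemma sm_one[simp]: "sm 1 x = x" using lv unfolding left_vs_def by blast

lemma sm_zerol[simp]: "sm 0 x = 0"
proof -
  have "sm 0 x + sm 0 x = sm 0 x + 0" using sm_addl[of 0 0 x] by simp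
  thus ?thesis by (rule add_left_imp_eq)
qed

lemma sm_zeror[simp]: "sm a 0 = 0"
proof -
  have "sm a 0 + sm a 0 = sm a 0 + 0" using sm_addr[of a 0 0] by simp
  thus ?thesis by (rule add_left_imp_eq)
qed

lemma sm_negl: "sm (- a) x = - sm a x"
proof -
  have "sm a x + sm (-a) x = 0" using sm_addl[of a "-a" x] by simp
  thus ?thesis by (metis add.commute add_eq_0_iff2 minus_unique)
qed

lemma sm_negr: "sm a (- x) = - sm a x"
proof -
  have "sm a x + sm a (-x) = 0" using sm_addr[of a x "-x"] by simp
  thus ?thesis by (metis minus_unique)
qed

lemma sm_diffr: "sm a (x - y) = sm a x - sm a y"
  using sm_addr[of a x "-y"] sm_negr[of a y] by simp

lemma sm_diffl: "sm (a - b) x = sm a x - sm b x"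
  using sm_addl[of a "-b" x] sm_negl[of b x] by simp

lemma sm_inv: "a \<noteq> 0 \<Longrightarrow> sm (inverse a) (sm a x) = x"
  by (simp flip: sm_mult)

lemma sm_eq0: "sm a x = 0 \<Longrightarrow> a \<noteq> 0 \<Longrightarrow> x = 0"
  using sm_inv[of a x] by simp

lemma minus_sm: "- x = sm (-1) x" by (simp add: sm_negl)

context
  fixes X assumes sub: "subspace_of sm X"
begin
lemma s0[simp]: "0 \<in> X" using sub unfolding subspace_of_def by blast
lemma sadd: "x \<in> X \<Longrightarrow> y \<in> X \<Longrightarrow> x + y \<in> X" using sub unfolding subspace_of_def by blast
lemma ssm: "x \<in> X \<Longrightarrow> sm a x \<in> X" using sub unfolding subspace_of_def by blast
lemma sneg: "x \<in> X \<Longrightarrow> - x \<in> X" using ssm[of x "-1"] by (simp add: minus_sm)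
lemma sdiff: "x \<in> X \<Longrightarrow> y \<in> X \<Longrightarrow> x - y \<in> X" using sadd[of x "-y"] sneg[of y] by simp
lemma ssm_rev: "sm a x \<in> X \<Longrightarrow> a \<noteq> 0 \<Longrightarrow> x \<in> X" using ssm[of "sm a x" "inverse a"] sm_inv by simp
lemma coset_eq: "coset_of X u = coset_of X v \<longleftrightarrow> u - v \<in> X"
proof
  assume "coset_of X u = coset_of X v"
  hence "u \<in> coset_of X v" using s0 unfolding coset_of_def by (metis add.right_neutral image_eqI)
  then obtain x where "x \<in> X" "u = v + x" unfolding coset_of_def by blast
  thus "u - v \<in> X" by simp
next
  assume d: "u - v \<in> X"
  show "coset_of X u = coset_of X v"
  proof
    show "coset_of X u \<subseteq> coset_of X v"
    proof
      fix t assume "t \<in> coset_of X u"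
      then obtain x where x: "x \<in> X" "t = u + x" unfolding coset_of_def by blast
      have "(u - v) + x \<in> X" using sadd d x by blast
      moreover have "t = v + ((u - v) + x)" using x by simp
      ultimately show "t \<in> coset_of X v" unfolding coset_of_def by blast
    qed
  next
    show "coset_of X v \<subseteq> coset_of X u"
    proof
      fix t assume "t \<in> coset_of X v"
      then obtain x where x: "x \<in> X" "t = v + x" unfolding coset_of_def by blast
      have "(v - u) + x \<in> X" using sadd sneg[OF d] x by simp
      moreover have "t = u + ((v - u) + x)" using x by simp
      ultimately show "t \<in> coset_of X u" unfolding coset_of_def by blast
    qed
  qed
qed
end

lemma Gr_complement:
  assumes XG: "X \<in> Gr sm" and W: "subspace_of sm W" and d: "distant X W"
  shows "W \<in> Gr sm"
proof -
  have X: "subspace_of sm X" using XG unfolding Gr_def by blast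
  have XW0: "X \<inter> W = {0}" and sumXW: "sumset X W = UNIV" using d unfolding distant_def by auto
  have dec: "\<exists>x w. x \<in> X \<and> w \<in> W \<and> v = x + w" for v
    using sumXW unfolding sumset_def by blast
  obtain f where bij: "bij_betw f X (quotient_sp X)"
    and fadd: "\<forall>x\<in>X. \<forall>y\<in>X. \<forall>u v. f x = coset_of X u \<longrightarrow> f y = coset_of X v \<longrightarrow>
               f (x + y) = coset_of X (u + v)"
    and fsm: "\<forall>a. \<forall>x\<in>X. \<forall>u. f x = coset_of X u \<longrightarrow> f (sm a x) = coset_of X (sm a u)"
    using XG unfolding Gr_def iso_to_quotient_def by blast
  define h where "h w = inv_into X f (coset_of X w)" for w
  have img: "f ` X = quotient_sp X" using bij by (simp add: bij_betw_def)
  have inj: "inj_on f X" using bij by (simp add: bij_betw_def)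
  have cq: "coset_of X w \<in> f ` X" for w using img unfolding quotient_sp_def by auto
  have hX: "h w \<in> X" for w unfolding h_def using cq inv_into_into by metis
  have fh: "f (h w) = coset_of X w" for w unfolding h_def using cq f_inv_into_f by metis
  have hf: "h u = x" if "x \<in> X" "f x = coset_of X u" for x u
    using inj hX fh that by (metis inj_on_def)
  define g where "g w = coset_of W (h w)" for w
  have ginj: "inj_on g W"
  proof (rule inj_onI)
    fix w1 w2 assume w: "w1 \<in> W" "w2 \<in> W" "g w1 = g w2"
    have "h w1 - h w2 \<in> W" using w coset_eq[OF W] unfolding g_def by blast
    moreover have "h w1 - h w2 \<in> X" using hX sdiff[OF X] by blast
    ultimately have "h w1 = h w2" using XW0 by (metis IntI singletonD right_minus_eq)
    hence "coset_of X w1 = coset_of X w2" using fh by metis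
    hence "w1 - w2 \<in> X" using coset_eq[OF X] by blast
    moreover have "w1 - w2 \<in> W" using sdiff[OF W] w by blast
    ultimately show "w1 = w2" using XW0 by (metis IntI singletonD right_minus_eq)
  qed
  have gimg: "g ` W = quotient_sp W"
  proof
    show "g ` W \<subseteq> quotient_sp W" unfolding g_def quotient_sp_def by auto
    show "quotient_sp W \<subseteq> g ` W"
    proof
      fix c assume "c \<in> quotient_sp W"
      then obtain v where c: "c = coset_of W v" unfolding quotient_sp_def by auto
      obtain x0 w0 where v: "x0 \<in> X" "w0 \<in> W" "v = x0 + w0" using dec by blast
      have "f x0 \<in> quotient_sp X" using img v by auto
      then obtain u where u: "f x0 = coset_of X u" unfolding quotient_sp_def by auto
      obtain x1 w1 where u2: "x1 \<in> X" "w1 \<in> W" "u = x1 + w1" using dec by blast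
      have "coset_of X u = coset_of X w1" using coset_eq[OF X] u2 by simp
      hence "h w1 = x0" using hf v u by simp
      hence "g w1 = coset_of W x0" unfolding g_def by simp
      also have "\<dots> = c" unfolding c using coset_eq[OF W] v sneg[OF W] by simp
      finally show "c \<in> g ` W" using u2 by blast
    qed
  qed
  have gadd: "\<forall>x\<in>W. \<forall>y\<in>W. \<forall>u v. g x = coset_of W u \<longrightarrow> g y = coset_of W v \<longrightarrow>
               g (x + y) = coset_of W (u + v)"
  proof (intro ballI allI impI)
    fix w1 w2 u v assume w: "w1 \<in> W" "w2 \<in> W" "g w1 = coset_of W u" "g w2 = coset_of W v"
    have "f (h w1 + h w2) = coset_of X (w1 + w2)" using fadd hX fh by blast
    hence "h (w1 + w2) = h w1 + h w2" using hf hX sadd[OF X] by blast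
    moreover have "h w1 - u \<in> W" "h w2 - v \<in> W" using w coset_eq[OF W] unfolding g_def by auto
    hence "(h w1 + h w2) - (u + v) \<in> W" using sadd[OF W, of "h w1 - u" "h w2 - v"] by (simp add: algebra_simps)
    ultimately show "g (w1 + w2) = coset_of W (u + v)" unfolding g_def using coset_eq[OF W] by simp
  qed
  have gsm: "\<forall>a. \<forall>x\<in>W. \<forall>u. g x = coset_of W u \<longrightarrow> g (sm a x) = coset_of W (sm a u)"
  proof (intro ballI allI impI)
    fix a w u assume w: "w \<in> W" "g w = coset_of W u"
    have "f (sm a (h w)) = coset_of X (sm a w)" using fsm hX fh by blast
    hence "h (sm a w) = sm a (h w)" using hf hX ssm[OF X] by blast
    moreover have "h w - u \<in> W" using w coset_eq[OF W] unfolding g_def by auto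
    hence "sm a (h w) - sm a u \<in> W" using ssm[OF W] sm_diffr by metis
    ultimately show "g (sm a w) = coset_of W (sm a u)" unfolding g_def using coset_eq[OF W] by simp
  qed
  show ?thesis unfolding Gr_def iso_to_quotient_def
    using W ginj gimg gadd gsm by (auto simp: bij_betw_def)
qed


definition lin :: "'v set \<Rightarrow> 'v \<Rightarrow> 'v set" where
  "lin S u = {s + sm a u | s a. s \<in> S}"

lemma lin_subspace: assumes S: "subspace_of sm S" shows "subspace_of sm (lin S u)"
  unfolding subspace_of_def
proof (intro conjI ballI allI)
  have "0 + sm 0 u \<in> lin S u" unfolding lin_def using s0[OF S] by blast
  thus "0 \<in> lin S u" by simp
next
  fix x y assume "x \<in> lin S u" "y \<in> lin S u"
  then obtain s1 a s2 b where "s1 \<in> S" "s2 \<in> S" "x = s1 + sm a u" "y = s2 + sm b u"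
    unfolding lin_def by blast
  moreover hence "x + y = (s1 + s2) + sm (a + b) u" by (simp add: sm_addl algebra_simps)
  ultimately show "x + y \<in> lin S u" unfolding lin_def using sadd[OF S] by blast
next
  fix c x assume "x \<in> lin S u"
  then obtain s1 a where "s1 \<in> S" "x = s1 + sm a u" unfolding lin_def by blast
  moreover hence "sm c x = sm c s1 + sm (c * a) u" by (simp add: sm_addr sm_mult)
  ultimately show "sm c x \<in> lin S u" unfolding lin_def using ssm[OF S] by blast
qed

lemma lin_base: "s \<in> S \<Longrightarrow> s \<in> lin S u"
proof -
  assume "s \<in> S"
  hence "s + sm 0 u \<in> lin S u" unfolding lin_def by blast
  thus ?thesis by simp
qed

lemma lin_vec: "subspace_of sm S \<Longrightarrow> u \<in> lin S u"
proof -
  assume "subspace_of sm S"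
  hence "0 + sm 1 u \<in> lin S u" unfolding lin_def using s0 by blast
  thus ?thesis by simp
qed

lemma complement_exists:
  assumes Z: "subspace_of sm Z" and T: "subspace_of sm T" and TZ: "T \<inter> Z = {0}"
  shows "\<exists>W. subspace_of sm W \<and> T \<subseteq> W \<and> distant Z W"
proof -
  define A where "A = {W. subspace_of sm W \<and> T \<subseteq> W \<and> W \<inter> Z = {0}}"
  have TA: "T \<in> A" unfolding A_def using T TZ by blast
  have "\<forall>C\<in>chains A. \<exists>U\<in>A. \<forall>X\<in>C. X \<subseteq> U"
  proof
    fix C assume C: "C \<in> chains A"
    show "\<exists>U\<in>A. \<forall>X\<in>C. X \<subseteq> U"
    proof (cases "C = {}")
      case True thus ?thesis using TA by blast
    next
      case False
      have CA: "C \<subseteq> A" and ch: "\<forall>x\<in>C. \<forall>y\<in>C. x \<subseteq> y \<or> y \<subseteq> x"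
        using C unfolding chains_def chain_subset_def by auto
      have sub: "subspace_of sm (\<Union>C)" unfolding subspace_of_def
      proof (intro conjI ballI allI)
        obtain W where "W \<in> C" using False by blast
        thus "0 \<in> \<Union>C" using CA unfolding A_def by (auto intro: s0)
      next
        fix x y assume "x \<in> \<Union>C" "y \<in> \<Union>C"
        then obtain W1 W2 where w: "W1 \<in> C" "W2 \<in> C" "x \<in> W1" "y \<in> W2" by blast
        show "x + y \<in> \<Union>C"
        proof (cases "W1 \<subseteq> W2")
          case True
          hence "x + y \<in> W2" using w CA sadd unfolding A_def by blast
          thus ?thesis using w by blast
        next
          case False
          hence "W2 \<subseteq> W1" using ch w by blast
          hence "x + y \<in> W1" using w CA sadd unfolding A_def by blast
          thus ?thesis using w by blast
        qed
      next
        fix a x assume "x \<in> \<Union>C"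
        then obtain W1 where w: "W1 \<in> C" "x \<in> W1" by blast
        hence "sm a x \<in> W1" using CA ssm unfolding A_def by blast
        thus "sm a x \<in> \<Union>C" using w by blast
      qed
      obtain W where W: "W \<in> C" using False by blast
      have "T \<subseteq> \<Union>C" using W CA unfolding A_def by blast
      moreover have "\<Union>C \<inter> Z = {0}"
      proof
        show "\<Union>C \<inter> Z \<subseteq> {0}" using CA unfolding A_def by blast
        show "{0} \<subseteq> \<Union>C \<inter> Z" using s0[OF sub] s0[OF Z] by blast
      qed
      ultimately have "\<Union>C \<in> A" using sub unfolding A_def by blast
      thus ?thesis by blast
    qed
  qed
  from Zorn_Lemma2[OF this] obtain M where MA: "M \<in> A" and max: "\<forall>X\<in>A. M \<subseteq> X \<longrightarrow> X = M"
    by blast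
  have M: "subspace_of sm M" "T \<subseteq> M" "M \<inter> Z = {0}" using MA unfolding A_def by auto
  have "sumset Z M = UNIV"
  proof (rule ccontr)
    assume "sumset Z M \<noteq> UNIV"
    then obtain v where v: "v \<notin> sumset Z M" by blast
    have L: "subspace_of sm (lin M v)" using lin_subspace[OF M(1)] .
    have MsubL: "M \<subseteq> lin M v" using lin_base by blast
    have "lin M v \<inter> Z \<subseteq> {0}"
    proof
      fix t assume "t \<in> lin M v \<inter> Z"
      then obtain m a where t: "m \<in> M" "t = m + sm a v" "t \<in> Z" unfolding lin_def by blast
      show "t \<in> {0}"
      proof (cases "a = 0")
        case True
        hence "m \<in> Z" using t by simp
        thus ?thesis using t True M(3) by auto
      next
        case False
        have "sm a v = t - m" using t by simp
        hence "v = sm (inverse a) (t - m)" using sm_inv[OF False] by metis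
        hence "v = sm (inverse a) t + sm (inverse a) (- m)" by (simp add: sm_addr[symmetric])
        moreover have "sm (inverse a) t \<in> Z" using ssm[OF Z] t by blast
        moreover have "sm (inverse a) (- m) \<in> M" using ssm[OF M(1)] sneg[OF M(1)] t by blast
        ultimately have "v \<in> sumset Z M" unfolding sumset_def by blast
        thus ?thesis using v by blast
      qed
    qed
    hence "lin M v \<inter> Z = {0}" using s0[OF L] s0[OF Z] by blast
    hence "lin M v \<in> A" using L MsubL M(2) unfolding A_def by blast
    hence "lin M v = M" using max MsubL by blast
    hence "v \<in> M" using lin_vec[OF M(1)] by metis
    hence "v \<in> sumset Z M" unfolding sumset_def using s0[OF Z] by force
    thus False using v by blast
  qed
  moreover have "Z \<inter> M = {0}" using M(3) by blast
  ultimately show ?thesis unfolding distant_def using M by blast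
qed


lemma zero_subspace: "subspace_of sm {0}" unfolding subspace_of_def by simp

lemma lin_iff: "t \<in> lin S u \<longleftrightarrow> (\<exists>s a. s \<in> S \<and> t = s + sm a u)"
  unfolding lin_def by blast

lemma lin_closed: assumes L: "subspace_of sm L" and "S \<subseteq> L" "u \<in> L" shows "lin S u \<subseteq> L"
proof
  fix t assume "t \<in> lin S u"
  then obtain s a where "s \<in> S" "t = s + sm a u" using lin_iff by blast
  thus "t \<in> L" using assms sadd[OF L] ssm[OF L] by blast
qed

lemma lin_solve:
  assumes Y: "subspace_of sm Y" and t: "t \<in> lin Y u" "t \<notin> Y"
  shows "u \<in> lin Y t"
proof -
  obtain y a where ya: "y \<in> Y" "t = y + sm a u" using t lin_iff by blast
  have a: "a \<noteq> 0" using ya t s0[OF Y] by auto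
  have "sm a u = t - y" using ya by simp
  hence "u = sm (inverse a) (t - y)" using sm_inv[OF a] by metis
  hence "u = sm (inverse a) (- y) + sm (inverse a) t" by (simp add: sm_addr[symmetric])
  moreover have "sm (inverse a) (- y) \<in> Y" using ssm[OF Y] sneg[OF Y] ya by blast
  ultimately show ?thesis using lin_iff by blast
qed

lemma lin_trans:
  assumes Z: "subspace_of sm Z" and v: "v \<in> lin Z u" shows "lin Z v \<subseteq> lin Z u"
proof (rule lin_closed[OF lin_subspace[OF Z]])
  show "Z \<subseteq> lin Z u" using lin_base by blast
qed (rule v)

lemma lin_sumset: assumes W: "subspace_of sm W" and u: "u \<in> W" shows "lin Y u \<subseteq> sumset Y W"
proof
  fix t assume "t \<in> lin Y u"
  then obtain s a where "s \<in> Y" "t = s + sm a u" using lin_iff by blast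
  moreover have "sm a u \<in> W" using ssm[OF W u] .
  ultimately show "t \<in> sumset Y W" unfolding sumset_def by blast
qed

lemma sumset_comm: "sumset X Y = sumset Y X"
proof -
  have "sumset X Y \<subseteq> sumset Y X" for X Y
  proof
    fix t assume "t \<in> sumset X Y"
    then obtain x y where "x \<in> X" "y \<in> Y" "t = x + y" unfolding sumset_def by blast
    moreover hence "t = y + x" by (simp add: add.commute)
    ultimately show "t \<in> sumset Y X" unfolding sumset_def by blast
  qed
  from this[of X Y] this[of Y X] show ?thesis by (rule equalityI)
qed

lemma distant_sym: "distant X Y \<longleftrightarrow> distant Y X"
  unfolding distant_def by (simp only: sumset_comm[of X Y] Int_commute[of X Y])

lemma sumset_subspace:
  assumes X: "subspace_of sm X" and Y: "subspace_of sm Y" shows "subspace_of sm (sumset X Y)"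
  unfolding subspace_of_def
proof (intro conjI ballI allI)
  show "0 \<in> sumset X Y" unfolding sumset_def using s0[OF X] s0[OF Y] by force
next
  fix s t assume "s \<in> sumset X Y" "t \<in> sumset X Y"
  then obtain x1 y1 x2 y2 where "x1 \<in> X" "y1 \<in> Y" "x2 \<in> X" "y2 \<in> Y" "s = x1 + y1" "t = x2 + y2"
    unfolding sumset_def by blast
  moreover hence "s + t = (x1 + x2) + (y1 + y2)" by (simp add: algebra_simps)
  ultimately show "s + t \<in> sumset X Y" unfolding sumset_def using sadd[OF X] sadd[OF Y] by blast
next
  fix a s assume "s \<in> sumset X Y"
  then obtain x1 y1 where "x1 \<in> X" "y1 \<in> Y" "s = x1 + y1" unfolding sumset_def by blast
  moreover hence "sm a s = sm a x1 + sm a y1" by (simp add: sm_addr)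
  ultimately show "sm a s \<in> sumset X Y" unfolding sumset_def using ssm[OF X] ssm[OF Y] by blast
qed

lemma int_subspace: "subspace_of sm X \<Longrightarrow> subspace_of sm Y \<Longrightarrow> subspace_of sm (X \<inter> Y)"
  unfolding subspace_of_def by blast

lemma compl_T:
  assumes Z: "subspace_of sm Z" and x: "x \<notin> Z" and y: "y \<notin> lin Z x"
  shows "\<exists>W. subspace_of sm W \<and> x \<in> W \<and> y \<in> W \<and> distant Z W"
proof -
  define T where "T = lin (lin {0} x) y"
  have T: "subspace_of sm T" unfolding T_def by (intro lin_subspace zero_subspace)
  have xT: "x \<in> T" unfolding T_def using lin_base lin_vec[OF zero_subspace] by blast
  have yT: "y \<in> T" unfolding T_def using lin_vec[OF lin_subspace[OF zero_subspace]] by blast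
  have "T \<inter> Z \<subseteq> {0}"
  proof
    fix t assume t: "t \<in> T \<inter> Z"
    then obtain a b where ab: "t = (0 + sm a x) + sm b y" unfolding T_def lin_def by blast
    have b: "b = 0"
    proof (rule ccontr)
      assume b: "b \<noteq> 0"
      have "sm b y = t - sm a x" using ab by simp
      hence "y = sm (inverse b) (t - sm a x)" using sm_inv[OF b] by metis
      hence "y = sm (inverse b) t + sm (- (inverse b * a)) x" by (simp add: sm_diffr sm_negl sm_mult)
      moreover have "sm (inverse b) t \<in> Z" using ssm[OF Z] t by blast
      ultimately show False using y lin_iff by blast
    qed
    have a: "a = 0"
    proof (rule ccontr)
      assume "a \<noteq> 0"
      moreover have "sm a x \<in> Z" using ab b t by simp
      ultimately show False using ssm_rev[OF Z] x by blast
    qed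
    show "t \<in> {0}" using ab a b by simp
  qed
  hence "T \<inter> Z = {0}" using s0[OF T] s0[OF Z] by blast
  then obtain W where "subspace_of sm W" "T \<subseteq> W" "distant Z W"
    using complement_exists[OF Z T] by blast
  thus ?thesis using xT yT by blast
qed

lemma compl_1:
  assumes Z: "subspace_of sm Z" and x: "x \<notin> Z"
  shows "\<exists>W. subspace_of sm W \<and> x \<in> W \<and> distant Z W"
proof -
  define T where "T = lin {0} x"
  have T: "subspace_of sm T" unfolding T_def by (intro lin_subspace zero_subspace)
  have xT: "x \<in> T" unfolding T_def using lin_vec[OF zero_subspace] by blast
  have "T \<inter> Z \<subseteq> {0}"
  proof
    fix t assume t: "t \<in> T \<inter> Z"
    then obtain a where ab: "t = 0 + sm a x" unfolding T_def lin_def by blast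
    have a: "a = 0"
    proof (rule ccontr)
      assume "a \<noteq> 0"
      moreover have "sm a x \<in> Z" using ab t by simp
      ultimately show False using ssm_rev[OF Z] x by blast
    qed
    show "t \<in> {0}" using ab a by simp
  qed
  hence "T \<inter> Z = {0}" using s0[OF T] s0[OF Z] by blast
  then obtain W where "subspace_of sm W" "T \<subseteq> W" "distant Z W"
    using complement_exists[OF Z T] by blast
  thus ?thesis using xT by blast
qed

lemma compl_0:
  assumes Z: "subspace_of sm Z"
  shows "\<exists>W. subspace_of sm W \<and> distant Z W"
  using complement_exists[OF Z zero_subspace] s0[OF Z] by blast


lemma nondist_vec: "x \<in> X \<Longrightarrow> x \<in> W \<Longrightarrow> x \<noteq> 0 \<Longrightarrow> \<not> distant X W"
  unfolding distant_def by blast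

lemma nondist_sub:
  assumes Z: "subspace_of sm Z" and d: "distant Z W" and XZ: "X \<subseteq> Z" "X \<noteq> Z"
  shows "\<not> distant X W"
proof
  assume "distant X W"
  hence s: "sumset X W = UNIV" unfolding distant_def by blast
  have ZW: "Z \<inter> W = {0}" using d unfolding distant_def by blast
  have "Z \<subseteq> X"
  proof
    fix z assume z: "z \<in> Z"
    obtain x w where xw: "x \<in> X" "w \<in> W" "z = x + w" using s unfolding sumset_def by blast
    have "w = z - x" using xw by simp
    hence "w \<in> Z" using sdiff[OF Z] z xw XZ by blast
    hence "w = 0" using ZW xw by blast
    thus "z \<in> X" using xw by simp
  qed
  thus False using XZ by blast
qed

lemma lin_W:
  assumes Z: "subspace_of sm Z" and W: "subspace_of sm W" and d: "distant Z W" and x: "x \<in> W"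
    and m: "m \<in> W" "m \<in> lin Z x"
  shows "m = sm (SOME a. m = sm a x) x"
proof -
  obtain z a where za: "z \<in> Z" "m = z + sm a x" using m lin_iff by blast
  have "z = m - sm a x" using za by simp
  hence "z \<in> W" using sdiff[OF W] ssm[OF W] m x by blast
  hence "z = 0" using d za unfolding distant_def by blast
  hence "m = sm a x" using za by simp
  thus ?thesis by (rule someI)
qed

lemma extend_lin:
  assumes Z: "subspace_of sm Z" and W: "subspace_of sm W" and d: "distant Z W" and x: "x \<in> W"
    and Y: "subspace_of sm Y" "Y \<subseteq> lin Z x" and s: "sumset Y W = UNIV"
  shows "lin Z x \<subseteq> lin Y x"
proof
  fix m assume m: "m \<in> lin Z x"
  obtain y w where yw: "y \<in> Y" "w \<in> W" "m = y + w" using s unfolding sumset_def by blast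
  have "w = m - y" using yw by simp
  hence "w \<in> lin Z x" using sdiff[OF lin_subspace[OF Z]] m yw Y by blast
  hence "w = sm (SOME a. w = sm a x) x" using lin_W[OF Z W d x] yw by blast
  hence "m = y + sm (SOME a. w = sm a x) x" using yw by simp
  thus "m \<in> lin Y x" using yw lin_iff by blast
qed

lemma sumset_closed:
  assumes L: "subspace_of sm L" and "X \<subseteq> L" "Y \<subseteq> L" shows "sumset X Y \<subseteq> L"
  unfolding sumset_def using assms sadd[OF L] by blast

lemma lin_eq_quot: "{x + sm a v | x a. x \<in> X} = lin X v"
  unfolding lin_def by blast

lemma backward:
  assumes XG: "X \<in> Gr sm" and YG: "Y \<in> Gr sm" and ZG: "Z \<in> Gr sm"
    and ZX: "Z \<noteq> X" and ZY: "Z \<noteq> Y" and nadj: "\<not> adjacent sm X Y"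
  shows "\<exists>W\<in>Gr sm. distant Z W \<and> \<not> distant X W \<and> \<not> distant Y W"
proof -
  have X: "subspace_of sm X" and Y: "subspace_of sm Y" and Z: "subspace_of sm Z"
    using XG YG ZG unfolding Gr_def by auto
  have WG: "W \<in> Gr sm" if "subspace_of sm W" "distant Z W" for W
    using Gr_complement[OF ZG] that by blast
  have indep: ?thesis if xy: "x \<in> X" "y \<in> Y" "x \<notin> Z" "y \<notin> lin Z x" for x y
  proof -
    obtain W where W: "subspace_of sm W" "x \<in> W" "y \<in> W" "distant Z W"
      using compl_T[OF Z xy(3,4)] by blast
    have "x \<noteq> 0" using xy s0[OF Z] by blast
    moreover have "y \<noteq> 0" using xy lin_base[OF s0[OF Z]] by blast
    ultimately show ?thesis using W WG xy nondist_vec by blast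
  qed
  have one: ?thesis if u: "u \<in> X" "u \<in> Y" "u \<notin> Z" for u
  proof -
    obtain W where W: "subspace_of sm W" "u \<in> W" "distant Z W"
      using compl_1[OF Z u(3)] by blast
    have "u \<noteq> 0" using u s0[OF Z] by blast
    thus ?thesis using W WG u nondist_vec by blast
  qed
  have ZsubL: "Z \<subseteq> lin Z u" for u using lin_base by blast
  show ?thesis
  proof (cases "X \<subseteq> Z")
    case XZ: True
    have nX: "\<not> distant X W" if "distant Z W" for W using nondist_sub[OF Z that XZ] ZX by blast
    show ?thesis
    proof (cases "Y \<subseteq> Z")
      case True
      have nY: "\<not> distant Y W" if "distant Z W" for W using nondist_sub[OF Z that True] ZY by blast
      obtain W where "subspace_of sm W" "distant Z W" using compl_0[OF Z] by blast
      thus ?thesis using nX nY WG by blast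
    next
      case False
      then obtain y where y: "y \<in> Y" "y \<notin> Z" by blast
      obtain W where W: "subspace_of sm W" "y \<in> W" "distant Z W" using compl_1[OF Z y(2)] by blast
      have "y \<noteq> 0" using y s0[OF Z] by blast
      thus ?thesis using W WG y nX nondist_vec by blast
    qed
  next
    case False
    then obtain x where x: "x \<in> X" "x \<notin> Z" by blast
    show ?thesis
    proof (cases "Y \<subseteq> Z")
      case True
      have nY: "\<not> distant Y W" if "distant Z W" for W using nondist_sub[OF Z that True] ZY by blast
      obtain W where W: "subspace_of sm W" "x \<in> W" "distant Z W" using compl_1[OF Z x(2)] by blast
      have "x \<noteq> 0" using x s0[OF Z] by blast
      thus ?thesis using W WG x nY nondist_vec by blast
    next
      case False
      then obtain y where y: "y \<in> Y" "y \<notin> Z" by blast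
      show ?thesis
      proof (cases "y \<in> lin Z x")
        case False thus ?thesis using indep x y by blast
      next
        case yL: True
        have xL: "x \<in> lin Z y" using lin_solve[OF Z yL y(2)] .
        have Leq: "lin Z y = lin Z x" using lin_trans[OF Z yL] lin_trans[OF Z xL] by blast
        show ?thesis
        proof (cases "\<exists>x'\<in>X. x' \<notin> lin Z x")
          case True
          then obtain x' where x': "x' \<in> X" "x' \<notin> lin Z x" by blast
          have x'Z: "x' \<notin> Z" using x' ZsubL by blast
          have "y \<notin> lin Z x'"
          proof
            assume "y \<in> lin Z x'"
            hence "x' \<in> lin Z y" using lin_solve[OF Z _ y(2)] by blast
            thus False using Leq x' by blast
          qed
          thus ?thesis using indep[OF x'(1) y(1) x'Z] by blast
        next
          case False
          hence Xsub: "X \<subseteq> lin Z x" by blast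
          show ?thesis
          proof (cases "\<exists>y'\<in>Y. y' \<notin> lin Z x")
            case True
            then obtain y' where "y' \<in> Y" "y' \<notin> lin Z x" by blast
            thus ?thesis using indep[OF x(1) _ x(2)] by blast
          next
            case False
            hence Ysub: "Y \<subseteq> lin Z x" by blast
            show ?thesis
            proof (cases "x \<in> Y")
              case True thus ?thesis using one x by blast
            next
              case xY: False
              show ?thesis
              proof (cases "y \<in> X")
                case True thus ?thesis using one y by blast
              next
                case yX: False
                obtain W1 where W1: "subspace_of sm W1" "x \<in> W1" "distant Z W1"
                  using compl_1[OF Z x(2)] by blast
                have x0: "x \<noteq> 0" using x s0[OF Z] by blast
                have y0: "y \<noteq> 0" using y s0[OF Z] by blast
                show ?thesis
                proof (cases "distant Y W1")
                  case False thus ?thesis using W1 WG x x0 nondist_vec by blast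
                next
                  case True
                  hence L1: "lin Z x \<subseteq> lin Y x"
                    using extend_lin[OF Z W1(1) W1(3) W1(2) Y Ysub] unfolding distant_def by blast
                  obtain W2 where W2: "subspace_of sm W2" "y \<in> W2" "distant Z W2"
                    using compl_1[OF Z y(2)] by blast
                  show ?thesis
                  proof (cases "distant X W2")
                    case False thus ?thesis using W2 WG y y0 nondist_vec by blast
                  next
                    case True
                    hence L2: "lin Z y \<subseteq> lin X y"
                      using extend_lin[OF Z W2(1) W2(3) W2(2) X] Xsub Leq unfolding distant_def by blast
                    have SL: "sumset X Y \<subseteq> lin Z x"
                      using sumset_closed[OF lin_subspace[OF Z] Xsub Ysub] .
                    have A1: "lin X y \<subseteq> sumset X Y" using lin_sumset[OF Y y(1)] .
                    have A2: "lin Y x \<subseteq> sumset X Y" using lin_sumset[OF X x(1)] sumset_comm by blast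
                    have E1: "sumset X Y = lin X y" using SL A1 L2 Leq by blast
                    have E2: "sumset X Y = lin Y x" using SL A2 L1 by blast
                    have "quot_dim_one sm (sumset X Y) X"
                      unfolding quot_dim_one_def lin_eq_quot
                      using E1 lin_vec[OF X] lin_base yX by blast
                    moreover have "quot_dim_one sm (sumset X Y) Y"
                      unfolding quot_dim_one_def lin_eq_quot
                      using E2 lin_vec[OF Y] lin_base xY by blast
                    ultimately have "adjacent sm X Y" unfolding adjacent_def by blast
                    thus ?thesis using nadj by blast
                  qed
                qed
              qed
            qed
          qed
        qed
      qed
    qed
  qed
qed


lemma lin_shift:
  assumes X: "subspace_of sm X" and x0: "x0 \<in> X" shows "lin X (x0 + u) = lin X u"
proof
  show "lin X (x0 + u) \<subseteq> lin X u"
  proof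
    fix t assume "t \<in> lin X (x0 + u)"
    then obtain s a where sa: "s \<in> X" "t = s + sm a (x0 + u)" using lin_iff by blast
    hence "t = (s + sm a x0) + sm a u" by (simp add: sm_addr add.assoc)
    moreover have "s + sm a x0 \<in> X" using sa x0 sadd[OF X] ssm[OF X] by blast
    ultimately show "t \<in> lin X u" using lin_iff by blast
  qed
next
  show "lin X u \<subseteq> lin X (x0 + u)"
  proof
    fix t assume "t \<in> lin X u"
    then obtain s a where sa: "s \<in> X" "t = s + sm a u" using lin_iff by blast
    hence "t = (s - sm a x0) + sm a (x0 + u)" by (simp add: sm_addr)
    moreover have "s - sm a x0 \<in> X" using sa x0 sdiff[OF X] ssm[OF X] by blast
    ultimately show "t \<in> lin X (x0 + u)" using lin_iff by blast
  qed
qed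

lemma dist_gen:
  assumes Y: "subspace_of sm Y" and W: "subspace_of sm W"
    and YM: "Y \<subseteq> M" and M: "M = lin Y u" and ZW: "sumset Z W = UNIV" and ZM: "Z \<subseteq> M"
    and w0: "w0 \<in> W" "w0 \<in> M" "w0 \<notin> Y"
    and WM: "\<And>m. m \<in> W \<Longrightarrow> m \<in> M \<Longrightarrow> \<exists>a. m = sm a w0"
  shows "distant Y W"
  unfolding distant_def
proof
  show "Y \<inter> W = {0}"
  proof
    show "Y \<inter> W \<subseteq> {0}"
    proof
      fix t assume t: "t \<in> Y \<inter> W"
      then obtain a where a: "t = sm a w0" using WM YM by blast
      have "a = 0" using ssm_rev[OF Y] t a w0 by blast
      thus "t \<in> {0}" using a by simp
    qed
    show "{0} \<subseteq> Y \<inter> W" using s0[OF Y] s0[OF W] by blast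
  qed
next
  have SS: "subspace_of sm (sumset Y W)" using sumset_subspace[OF Y W] .
  have "u \<in> lin Y w0" using lin_solve[OF Y _ w0(3)] w0(2) M by blast
  hence uS: "u \<in> sumset Y W" using lin_sumset[OF W w0(1)] by blast
  have YS: "Y \<subseteq> sumset Y W"
  proof
    fix y assume "y \<in> Y" thus "y \<in> sumset Y W" unfolding sumset_def using s0[OF W] by force
  qed
  have WS: "W \<subseteq> sumset Y W"
  proof
    fix w assume "w \<in> W" thus "w \<in> sumset Y W" unfolding sumset_def using s0[OF Y] by force
  qed
  have MS: "M \<subseteq> sumset Y W" using lin_closed[OF SS YS uS] M by simp
  show "sumset Y W = UNIV"
  proof (rule ccontr)
    assume "sumset Y W \<noteq> UNIV"
    then obtain v where v: "v \<notin> sumset Y W" by blast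
    obtain z w where zw: "z \<in> Z" "w \<in> W" "v = z + w" using ZW unfolding sumset_def by blast
    have "z + w \<in> sumset Y W" using sadd[OF SS] zw ZM MS WS by blast
    thus False using v zw by simp
  qed
qed

lemma forward:
  assumes XG: "X \<in> Gr sm" and YG: "Y \<in> Gr sm" and adj: "adjacent sm X Y"
  shows "\<exists>Z\<in>Gr sm. Z \<noteq> X \<and> Z \<noteq> Y \<and> (\<forall>W\<in>Gr sm. distant Z W \<longrightarrow> distant X W \<or> distant Y W)"
proof -
  have X: "subspace_of sm X" and Y: "subspace_of sm Y" using XG YG unfolding Gr_def by auto
  define M where "M = sumset X Y"
  have Msub: "subspace_of sm M" unfolding M_def using sumset_subspace[OF X Y] .
  obtain v1 where v1: "v1 \<in> M" "v1 \<notin> X" "M = lin X v1"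
    using adj unfolding adjacent_def quot_dim_one_def lin_eq_quot M_def by blast
  obtain x0 y where xy0: "x0 \<in> X" "y \<in> Y" "v1 = x0 + y" using v1(1) unfolding M_def sumset_def by blast
  have My: "M = lin X y" using v1(3) xy0 lin_shift[OF X] by simp
  have yX: "y \<notin> X" using xy0 v1(2) sadd[OF X] by blast
  obtain v2 where v2: "v2 \<in> M" "v2 \<notin> Y" "M = lin Y v2"
    using adj unfolding adjacent_def quot_dim_one_def lin_eq_quot M_def by blast
  obtain x y1 where xy1: "x \<in> X" "y1 \<in> Y" "v2 = y1 + x"
  proof -
    obtain x y1 where "x \<in> X" "y1 \<in> Y" "v2 = x + y1" using v2(1) unfolding M_def sumset_def by blast
    moreover hence "v2 = y1 + x" by (simp add: add.commute)
    ultimately show ?thesis using that by blast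
  qed
  have Mx: "M = lin Y x" using v2(3) xy1 lin_shift[OF Y] by simp
  have xY: "x \<notin> Y" using xy1 v2(2) sadd[OF Y] by blast
  define S where "S = X \<inter> Y"
  have Ssub: "subspace_of sm S" unfolding S_def using int_subspace[OF X Y] .
  have XM: "X \<subseteq> M" using My lin_base by blast
  have YM: "Y \<subseteq> M" using Mx lin_base by blast
  have YS: "Y \<subseteq> lin S y"
  proof
    fix y' assume y': "y' \<in> Y"
    then obtain s a where sa: "s \<in> X" "y' = s + sm a y" using YM My lin_iff by blast
    have "s = y' - sm a y" using sa by simp
    hence "s \<in> Y" using sdiff[OF Y] ssm[OF Y] y' xy0 by blast
    thus "y' \<in> lin S y" using sa lin_iff unfolding S_def by blast
  qed
  define Z where "Z = lin S (x + y)"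
  have Zsub: "subspace_of sm Z" unfolding Z_def using lin_subspace[OF Ssub] .
  have xyZ: "x + y \<in> Z" unfolding Z_def using lin_vec[OF Ssub] .
  have ZX: "Z \<noteq> X"
  proof
    assume "Z = X"
    hence "(x + y) - x \<in> X" using xyZ xy1 sdiff[OF X] by blast
    thus False using yX by simp
  qed
  have ZY: "Z \<noteq> Y"
  proof
    assume "Z = Y"
    hence "(x + y) - y \<in> Y" using xyZ xy0 sdiff[OF Y] by blast
    thus False using xY by simp
  qed
  have ZM: "Z \<subseteq> M" unfolding Z_def
  proof (rule lin_closed[OF Msub])
    show "S \<subseteq> M" using XM unfolding S_def by blast
    show "x + y \<in> M" unfolding M_def sumset_def using xy0 xy1 by blast
  qed
  have MZx: "M \<subseteq> lin Z x"
  proof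
    fix m assume "m \<in> M"
    then obtain y' a where ya: "y' \<in> Y" "m = y' + sm a x" using Mx lin_iff by blast
    then obtain s b where sb: "s \<in> S" "y' = s + sm b y" using YS lin_iff by blast
    have "m = (s + sm b (x + y)) + sm (a - b) x" using ya sb by (simp add: sm_addr sm_diffl algebra_simps)
    moreover have "s + sm b (x + y) \<in> Z" unfolding Z_def using sb lin_iff by blast
    ultimately show "m \<in> lin Z x" using lin_iff by blast
  qed
  have xZ: "x \<notin> Z"
  proof
    assume "x \<in> Z"
    then obtain s b where sb: "s \<in> S" "x = s + sm b (x + y)" unfolding Z_def using lin_iff by blast
    have "sm b y = x - s - sm b x" using sb by (simp add: sm_addr algebra_simps)
    moreover have "x - s - sm b x \<in> X" using sb xy1 sdiff[OF X] ssm[OF X] unfolding S_def by blast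
    ultimately have "b = 0" using ssm_rev[OF X] yX by metis
    hence "x = s" using sb by simp
    thus False using sb xY unfolding S_def by blast
  qed
  obtain C where C: "subspace_of sm C" "distant M C" using compl_0[OF Msub] by blast
  have MC0: "\<And>c. c \<in> M \<Longrightarrow> c \<in> C \<Longrightarrow> c = 0" using C unfolding distant_def by blast
  define W0 where "W0 = lin C y"
  have W0sub: "subspace_of sm W0" unfolding W0_def using lin_subspace[OF C(1)] .
  have yM: "y \<in> M" using YM xy0 by blast
  have d1: "distant X W0" unfolding distant_def
  proof
    show "X \<inter> W0 = {0}"
    proof
      show "X \<inter> W0 \<subseteq> {0}"
      proof
        fix t assume t: "t \<in> X \<inter> W0"
        then obtain c a where ca: "c \<in> C" "t = c + sm a y" unfolding W0_def using lin_iff by blast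
        have "c = t - sm a y" using ca by simp
        hence "c \<in> M" using sdiff[OF Msub] ssm[OF Msub] t XM yM by blast
        hence "c = 0" using MC0 ca by blast
        hence "sm a y \<in> X" using ca t by simp
        hence "a = 0" using ssm_rev[OF X] yX by blast
        thus "t \<in> {0}" using ca \<open>c = 0\<close> by simp
      qed
      show "{0} \<subseteq> X \<inter> W0" using s0[OF X] s0[OF W0sub] by blast
    qed
  next
    show "sumset X W0 = UNIV"
    proof (rule ccontr)
      assume "sumset X W0 \<noteq> UNIV"
      then obtain v where v: "v \<notin> sumset X W0" by blast
      obtain m c where mc: "m \<in> M" "c \<in> C" "v = m + c" using C unfolding distant_def sumset_def by blast
      obtain x' a where xa: "x' \<in> X" "m = x' + sm a y" using mc My lin_iff by blast
      have "v = x' + (c + sm a y)" using mc xa by (simp add: algebra_simps)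
      moreover have "c + sm a y \<in> W0" unfolding W0_def using mc lin_iff by blast
      ultimately show False using v xa unfolding sumset_def by blast
    qed
  qed
  have W0G: "W0 \<in> Gr sm" using Gr_complement[OF XG W0sub d1] .
  have d2: "distant Z W0" unfolding distant_def
  proof
    show "Z \<inter> W0 = {0}"
    proof
      show "Z \<inter> W0 \<subseteq> {0}"
      proof
        fix t assume t: "t \<in> Z \<inter> W0"
        then obtain c a where ca: "c \<in> C" "t = c + sm a y" unfolding W0_def using lin_iff by blast
        have "c = t - sm a y" using ca by simp
        hence "c \<in> M" using sdiff[OF Msub] ssm[OF Msub] t ZM yM by blast
        hence c0: "c = 0" using MC0 ca by blast
        obtain s b where sb: "s \<in> S" "t = s + sm b (x + y)" using t unfolding Z_def using lin_iff by blast
        have "sm b x = sm a y - sm b y - s" using sb ca c0 by (simp add: sm_addr algebra_simps)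
        moreover have "sm a y - sm b y - s \<in> Y" using sb xy0 sdiff[OF Y] ssm[OF Y] unfolding S_def by blast
        ultimately have b0: "b = 0" using ssm_rev[OF Y] xY by metis
        hence "sm a y \<in> X" using sb ca c0 unfolding S_def by simp
        hence "a = 0" using ssm_rev[OF X] yX by blast
        thus "t \<in> {0}" using ca c0 by simp
      qed
      show "{0} \<subseteq> Z \<inter> W0" using s0[OF Zsub] s0[OF W0sub] by blast
    qed
  next
    show "sumset Z W0 = UNIV"
    proof (rule ccontr)
      assume "sumset Z W0 \<noteq> UNIV"
      then obtain v where v: "v \<notin> sumset Z W0" by blast
      obtain m c where mc: "m \<in> M" "c \<in> C" "v = m + c" using C unfolding distant_def sumset_def by blast
      obtain y' a where ya: "y' \<in> Y" "m = y' + sm a x" using mc Mx lin_iff by blast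
      then obtain s b where sb: "s \<in> S" "y' = s + sm b y" using YS lin_iff by blast
      have "v = (s + sm a (x + y)) + (c + sm (b - a) y)" using mc ya sb
        by (simp add: sm_addr sm_diffl algebra_simps)
      moreover have "s + sm a (x + y) \<in> Z" unfolding Z_def using sb lin_iff by blast
      moreover have "c + sm (b - a) y \<in> W0" unfolding W0_def using mc lin_iff by blast
      ultimately show False using v unfolding sumset_def by blast
    qed
  qed
  have ZG: "Z \<in> Gr sm" using Gr_complement[OF W0G Zsub distant_sym[THEN iffD1, OF d2]] .
  have propW: "distant X W \<or> distant Y W" if WG: "W \<in> Gr sm" and dZW: "distant Z W" for W
  proof -
    have W: "subspace_of sm W" using WG unfolding Gr_def by blast
    have ZW: "sumset Z W = UNIV" and ZW0: "\<And>t. t \<in> Z \<Longrightarrow> t \<in> W \<Longrightarrow> t = 0"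
      using dZW unfolding distant_def by auto
    obtain z0 w0 where zw: "z0 \<in> Z" "w0 \<in> W" "x = z0 + w0" using ZW unfolding sumset_def by blast
    have "w0 = x - z0" using zw by simp
    hence w0M: "w0 \<in> M" using sdiff[OF Msub] XM xy1 ZM zw by blast
    have WM: "\<exists>a. m = sm a w0" if m: "m \<in> W" "m \<in> M" for m
    proof -
      obtain z a where za: "z \<in> Z" "m = z + sm a x" using m MZx lin_iff by blast
      have "z + sm a z0 = m - sm a w0" using za zw by (simp add: sm_addr)
      moreover have "z + sm a z0 \<in> Z" using sadd[OF Zsub] ssm[OF Zsub] za zw by blast
      moreover have "m - sm a w0 \<in> W" using sdiff[OF W] ssm[OF W] m zw by blast
      ultimately have "m - sm a w0 = 0" using ZW0 by metis
      thus ?thesis by auto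
    qed
    have "\<not> (w0 \<in> X \<and> w0 \<in> Y)"
    proof
      assume "w0 \<in> X \<and> w0 \<in> Y"
      hence "w0 \<in> Z" unfolding Z_def S_def using lin_base by blast
      hence "w0 = 0" using ZW0 zw by blast
      thus False using zw xZ by simp
    qed
    moreover have "distant Y W" if "w0 \<notin> Y"
      using dist_gen[OF Y W YM Mx ZW ZM zw(2) w0M that WM] by blast
    moreover have "distant X W" if "w0 \<notin> X"
      using dist_gen[OF X W XM My ZW ZM zw(2) w0M that WM] by blast
    ultimately show ?thesis by blast
  qed
  show ?thesis using ZG ZX ZY propW by blast
qed


lemma not_adj_self: "subspace_of sm X \<Longrightarrow> \<not> adjacent sm X X"
  unfolding adjacent_def quot_dim_one_def using sumset_closed[of X X X] by blast

lemma adj_char: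
  assumes XG: "X \<in> Gr sm" and YG: "Y \<in> Gr sm"
  shows "adjacent sm X Y \<longleftrightarrow> charP (Gr sm) distant X Y"
proof
  assume a: "adjacent sm X Y"
  have "X \<noteq> Y" using a not_adj_self XG unfolding Gr_def by blast
  thus "charP (Gr sm) distant X Y" unfolding charP_def using forward[OF XG YG a] by blast
next
  assume c: "charP (Gr sm) distant X Y"
  then obtain Z where Z: "Z \<in> Gr sm" "Z \<noteq> X" "Z \<noteq> Y"
    "\<forall>W\<in>Gr sm. distant Z W \<longrightarrow> distant X W \<or> distant Y W" unfolding charP_def by blast
  show "adjacent sm X Y"
  proof (rule ccontr)
    assume "\<not> adjacent sm X Y"
    from backward[OF XG YG Z(1) Z(2) Z(3) this] Z(4) show False by blast
  qed
qed

end

lemma charP_transfer: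
  assumes bij: "bij_betw \<phi> A B" and R: "\<forall>X\<in>A. \<forall>Y\<in>A. R X Y \<longleftrightarrow> R' (\<phi> X) (\<phi> Y)"
    and X: "X \<in> A" and Y: "Y \<in> A"
  shows "charP A R X Y \<longleftrightarrow> charP B R' (\<phi> X) (\<phi> Y)"
proof -
  have inj: "inj_on \<phi> A" and img: "\<phi> ` A = B" using bij by (auto simp: bij_betw_def)
  have neq: "\<And>U V. U \<in> A \<Longrightarrow> V \<in> A \<Longrightarrow> (\<phi> U = \<phi> V) = (U = V)" using inj by (auto simp: inj_on_def)
  have allB: "(\<forall>W'\<in>B. P W') \<longleftrightarrow> (\<forall>W\<in>A. P (\<phi> W))" for P using img by blast
  have exB: "(\<exists>W'\<in>B. P W') \<longleftrightarrow> (\<exists>W\<in>A. P (\<phi> W))" for P using img by blast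
  show ?thesis unfolding charP_def allB exB
    using X Y R neq by (auto; metis)
qed

theorem theorem4p1:
  fixes sm :: "'k::division_ring \<Rightarrow> 'v::ab_group_add \<Rightarrow> 'v"
    and sm' :: "'k2::division_ring \<Rightarrow> 'w::ab_group_add \<Rightarrow> 'w"
    and \<phi> :: "'v set \<Rightarrow> 'w set"
  assumes "left_vs sm" and "left_vs sm'"
    and "Gr sm \<noteq> {}" and "Gr sm' \<noteq> {}"
    and "bij_betw \<phi> (Gr sm) (Gr sm')"
    and "\<forall>X\<in>Gr sm. \<forall>Y\<in>Gr sm. distant X Y \<longleftrightarrow> distant (\<phi> X) (\<phi> Y)"
  shows "\<forall>X\<in>Gr sm. \<forall>Y\<in>Gr sm. adjacent sm X Y \<longleftrightarrow> adjacent sm' (\<phi> X) (\<phi> Y)"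
proof (intro ballI)
  fix X Y assume X: "X \<in> Gr sm" and Y: "Y \<in> Gr sm"
  interpret A: lvs sm by (rule lvs.intro) (rule assms(1))
  interpret B: lvs sm' by (rule lvs.intro) (rule assms(2))
  have X': "\<phi> X \<in> Gr sm'" by (rule bij_betw_apply[OF assms(5) X])
  have Y': "\<phi> Y \<in> Gr sm'" by (rule bij_betw_apply[OF assms(5) Y])
  have e1: "adjacent sm X Y \<longleftrightarrow> charP (Gr sm) distant X Y" by (rule A.adj_char[OF X Y])
  have e2: "adjacent sm' (\<phi> X) (\<phi> Y) \<longleftrightarrow> charP (Gr sm') distant (\<phi> X) (\<phi> Y)" by (rule B.adj_char[OF X' Y'])
  have e3: "charP (Gr sm) distant X Y \<longleftrightarrow> charP (Gr sm') distant (\<phi> X) (\<phi> Y)"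
    by (rule charP_transfer[OF assms(5) assms(6) X Y])
  show "adjacent sm X Y \<longleftrightarrow> adjacent sm' (\<phi> X) (\<phi> Y)"
    unfolding e1 e2 by (rule e3)
qed

end
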